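(* In the setting described in the context, Seller's expected payoff is increasing in the informativeness of Seller's information structure: whenever $(X',\pi'^S)$ is more informative than $(X,\pi^S)$ in the sense of Blackwell, Seller's expected payoff under $(X',\pi'^S)$ is at least as large as under $(X,\pi^S)$.
   Context: Let $0<q_\ell<q_h<\infty$, $Q=[q_\ell,q_h]$, and let $c$ be a real number with $0<c<q_\ell$. Let $F$ be a probability distribution on $[0,1]$ with support $[0,1]$ admitting a twice continuously differentiable density $f:(0,1)\to\mathbb{R}_{>0}$. Define $r(v)=(1-F(v))/f(v)$ and $\psi(v)=v-r(v)$ on $(0,1)$, and assume $\psi'(v)>0$ whenever $\psi(v)>0$. For $q\in Q$, $p(q)$ is the unique maximizer over $p\in\mathbb{R}$ of $(p-c)\big(1-F(p/q)\big)$. Model: the quality $q$ is drawn from a prior $\mu\in\Delta(Q)$ with support $Q$; Buyer's type $v\sim F$ is independent of $q$. Seller's information structure is $(X,\pi^S)$, with $X$ a measurable signal space and $\pi^S:Q\to\Delta(X)$; on observing $x$ Seller forms the Bayesian posterior $\mu^S_x$, and $\mu^S$ denotes the distribution of Seller's posterior mean $\mathbb{E}_{\mu^S_x}[q]$. The distribution $\mu^B$ of Buyer's posterior means is assumed to equal $\mu^S$. Seller's expected payoff is $\mathbb{E}_{q\sim\mu^B}\big[(p(q)-c)\big(1-F(p(q)/q)\big)\big]$. *)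

theory Defs
  imports "HOL-Probability.Probability"
begin

definition profit :: "(real \<Rightarrow> real) \<Rightarrow> real \<Rightarrow> real \<Rightarrow> real \<Rightarrow> real" where
  "profit F c q p = (p - c) * (1 - F (p / q))"

definition opt_price :: "(real \<Rightarrow> real) \<Rightarrow> real \<Rightarrow> real \<Rightarrow> real" where
  "opt_price F c q = (THE p. \<forall>p'. profit F c q p' \<le> profit F c q p)"

definition hazard_inv :: "(real \<Rightarrow> real) \<Rightarrow> (real \<Rightarrow> real) \<Rightarrow> real \<Rightarrow> real" where
  "hazard_inv F f v = (1 - F v) / f v"

definition virt_val :: "(real \<Rightarrow> real) \<Rightarrow> (real \<Rightarrow> real) \<Rightarrow> real \<Rightarrow> real" where
  "virt_val F f v = v - hazard_inv F f v"

definition joint :: "real measure \<Rightarrow> 'x measure \<Rightarrow> (real \<Rightarrow> 'x measure) \<Rightarrow> (real \<times> 'x) measure" where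
  "joint mu SX K = mu \<bind> (\<lambda>q. distr (K q) (mu \<Otimes>\<^sub>M SX) (\<lambda>x. (q, x)))"

text \<open>Seller's posterior mean E[q | x], as the conditional expectation of the quality
  given the sigma-algebra generated by the signal.\<close>
definition post_mean :: "real measure \<Rightarrow> 'x measure \<Rightarrow> (real \<Rightarrow> 'x measure) \<Rightarrow> real \<times> 'x \<Rightarrow> real" where
  "post_mean mu SX K = real_cond_exp (joint mu SX K)
      (vimage_algebra (space (mu \<Otimes>\<^sub>M SX)) snd SX) fst"

definition post_mean_dist :: "real measure \<Rightarrow> 'x measure \<Rightarrow> (real \<Rightarrow> 'x measure) \<Rightarrow> real measure" where
  "post_mean_dist mu SX K = distr (joint mu SX K) borel (post_mean mu SX K)"

text \<open>Seller's expected payoff, with Buyer's posterior-mean distribution mu^B = mu^S.\<close>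
definition seller_payoff :: "(real \<Rightarrow> real) \<Rightarrow> real \<Rightarrow> real measure \<Rightarrow> 'x measure \<Rightarrow> (real \<Rightarrow> 'x measure) \<Rightarrow> real" where
  "seller_payoff F c mu SX K =
     (\<integral>q. profit F c q (opt_price F c q) \<partial>(post_mean_dist mu SX K))"

definition info_structure :: "real measure \<Rightarrow> 'x measure \<Rightarrow> (real \<Rightarrow> 'x measure) \<Rightarrow> bool" where
  "info_structure mu SX K \<longleftrightarrow> K \<in> measurable mu (prob_algebra SX)"

definition blackwell_more_informative ::
  "real set \<Rightarrow> 'y measure \<Rightarrow> (real \<Rightarrow> 'y measure) \<Rightarrow> 'x measure \<Rightarrow> (real \<Rightarrow> 'x measure) \<Rightarrow> bool" where
  "blackwell_more_informative Q SY K' SX K \<longleftrightarrow>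
     (\<exists>g. g \<in> measurable SY (prob_algebra SX) \<and> (\<forall>q\<in>Q. K q = K' q \<bind> g))"

end

theory Submission
  imports Defs
begin
definition Wf :: "(real \<Rightarrow> real) \<Rightarrow> real \<Rightarrow> real \<Rightarrow> real" where
  "Wf F c q = (SUP t\<in>{0..1}. (q * t - c) * (1 - F t))"

lemma Wf_bdd:
  fixes F :: "real \<Rightarrow> real" and q c :: real
  assumes "continuous_on {0..1} F"
  shows "bdd_above ((\<lambda>t. (q * t - c) * (1 - F t)) ` {0..1})"
proof -
  have "continuous_on {0..1} (\<lambda>t. (q * t - c) * (1 - F t))"
    using assms by (intro continuous_intros) auto
  then have "compact ((\<lambda>t. (q * t - c) * (1 - F t)) ` {0..1})"
    by (intro compact_continuous_image) auto
  then show ?thesis by (intro bounded_imp_bdd_above compact_imp_bounded)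
qed

lemma Wf_convex:
  fixes F :: "real \<Rightarrow> real" and c :: real
  assumes "continuous_on {0..1} F"
  shows "convex_on UNIV (Wf F c)"
proof (rule convex_onI)
  fix x y :: real and u :: real
  assume u: "0 < u" "u < 1"
  show "Wf F c ((1 - u) *\<^sub>R x + u *\<^sub>R y) \<le> (1 - u) * Wf F c x + u * Wf F c y"
    unfolding Wf_def
  proof (rule cSUP_least)
    show "{0..1::real} \<noteq> {}" by simp
    fix t :: real assume t: "t \<in> {0..1}"
    have "(((1 - u) *\<^sub>R x + u *\<^sub>R y) * t - c) * (1 - F t) =
        (1 - u) * ((x * t - c) * (1 - F t)) + u * ((y * t - c) * (1 - F t))"
      by (simp add: algebra_simps)
    also have "\<dots> \<le> (1 - u) * (SUP t\<in>{0..1}. (x * t - c) * (1 - F t)) + u * (SUP t\<in>{0..1}. (y * t - c) * (1 - F t))"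
      using u t by (intro add_mono mult_left_mono cSUP_upper Wf_bdd assms) auto
    finally show "(((1 - u) *\<^sub>R x + u *\<^sub>R y) * t - c) * (1 - F t) \<le> \<dots>" .
  qed
qed simp

lemma Wf_cont:
  fixes F :: "real \<Rightarrow> real" and c :: real
  assumes "continuous_on {0..1} F"
  shows "continuous_on UNIV (Wf F c)"
  by (rule convex_on_continuous) (auto intro: Wf_convex assms)

lemma Wf_eq:
  fixes F :: "real \<Rightarrow> real" and q c p :: real
  assumes cont: "continuous_on {0..1} F"
    and F0: "F 0 = 0" and F1: "F 1 = 1"
    and Fb: "\<And>x. x < 0 \<Longrightarrow> F x = 0" and Fa: "\<And>x. 1 < x \<Longrightarrow> F x = 1"
    and q: "0 < q" and c: "0 < c"
    and pmax: "\<forall>p'. profit F c q p' \<le> profit F c q p"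
  shows "profit F c q p = Wf F c q"
proof (rule antisym)
  note bdd = Wf_bdd[OF cont, of q c]
  have le: "(q * t - c) * (1 - F t) \<le> Wf F c q" if "t \<in> {0..1}" for t
    unfolding Wf_def using that bdd by (intro cSUP_upper) auto
  show "Wf F c q \<le> profit F c q p"
    unfolding Wf_def
  proof (rule cSUP_least)
    fix t :: real assume "t \<in> {0..1}"
    have "(q * t - c) * (1 - F t) = profit F c q (q * t)"
      using q by (simp add: profit_def)
    also have "\<dots> \<le> profit F c q p" using pmax by blast
    finally show "(q * t - c) * (1 - F t) \<le> profit F c q p" .
  qed simp
  define t where "t = p / q"
  have pt: "p = q * t" using q by (simp add: t_def)
  show "profit F c q p \<le> Wf F c q"
  proof (cases "t < 0")
    case True
    have "profit F c q p = p - c" using Fb[OF True] by (simp add: profit_def t_def[symmetric])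
    also have "\<dots> \<le> (q * 0 - c) * (1 - F 0)" using mult_pos_neg[OF q True] pt F0 by simp
    also have "\<dots> \<le> Wf F c q" by (rule le) simp
    finally show ?thesis .
  next
    case False
    show ?thesis
    proof (cases "1 < t")
      case True
      have "profit F c q p = (q * 1 - c) * (1 - F 1)" using Fa[OF True] F1 by (simp add: profit_def t_def[symmetric])
      also have "\<dots> \<le> Wf F c q" by (rule le) simp
      finally show ?thesis .
    next
      case False2: False
      have "profit F c q p = (q * t - c) * (1 - F t)" using q by (simp add: profit_def t_def)
      also have "\<dots> \<le> Wf F c q" using False False2 by (intro le) auto
      finally show ?thesis .
    qed
  qed
qed

lemma joint_props:
  fixes mu :: "real measure" and S :: "'x measure" and K
  assumes mu: "prob_space mu" and K[measurable]: "K \<in> mu \<rightarrow>\<^sub>M prob_algebra S"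
  shows "(\<lambda>q. distr (K q) (mu \<Otimes>\<^sub>M S) (\<lambda>x. (q, x))) \<in> mu \<rightarrow>\<^sub>M prob_algebra (mu \<Otimes>\<^sub>M S)"
    and "sets (joint mu S K) = sets (mu \<Otimes>\<^sub>M S)" and "prob_space (joint mu S K)"
    and "space (joint mu S K) = space (mu \<Otimes>\<^sub>M S)"
proof -
  show ker: "(\<lambda>q. distr (K q) (mu \<Otimes>\<^sub>M S) (\<lambda>x. (q, x))) \<in> mu \<rightarrow>\<^sub>M prob_algebra (mu \<Otimes>\<^sub>M S)"
    by measurable
  have m: "mu \<in> space (prob_algebra mu)" using mu by (simp add: space_prob_algebra)
  show s: "sets (joint mu S K) = sets (mu \<Otimes>\<^sub>M S)"
    unfolding joint_def by (rule sets_bind'[OF m ker])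
  show "prob_space (joint mu S K)"
    unfolding joint_def by (rule prob_space_bind'[OF m ker])
  show "space (joint mu S K) = space (mu \<Otimes>\<^sub>M S)"
    using sets_eq_imp_space_eq[OF s] .
qed

lemma pm_props:
  fixes mu :: "real measure" and S :: "'x measure" and K and a b :: real
  assumes mu: "prob_space mu" and K[measurable]: "K \<in> mu \<rightarrow>\<^sub>M prob_algebra S"
    and sp: "space mu \<subseteq> {a..b}" and a: "0 < a" and idm: "(\<lambda>q. q) \<in> borel_measurable mu"
  defines "P \<equiv> joint mu S K" and "Fs \<equiv> vimage_algebra (space (mu \<Otimes>\<^sub>M S)) snd S"
    and "m \<equiv> post_mean mu S K"
  shows "sigma_finite_subalgebra P Fs" and "AE z in P. m z \<in> {a..b}"
    and "m \<in> borel_measurable Fs" and "m \<in> borel_measurable (mu \<Otimes>\<^sub>M S)"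
    and "integrable P fst"
    and "\<And>\<psi> B. \<psi> \<in> borel_measurable S \<Longrightarrow> (\<And>y. y \<in> space S \<Longrightarrow> \<bar>\<psi> y\<bar> \<le> B) \<Longrightarrow>
           (\<integral>z. \<psi> (snd z) * m z \<partial>P) = (\<integral>z. \<psi> (snd z) * fst z \<partial>P)"
proof -
  note jp = joint_props[OF mu K]
  have sP: "sets P = sets (mu \<Otimes>\<^sub>M S)" and pP: "prob_space P" and spP: "space P = space (mu \<Otimes>\<^sub>M S)"
    using jp unfolding P_def by auto
  interpret P: prob_space P by (rule pP)
  have snd_meas: "snd \<in> measurable P S"
    using measurable_snd by (subst measurable_cong_sets[OF sP refl])
  have sub: "subalgebra P Fs"
    unfolding subalgebra_def Fs_def
    using sets_image_in_sets[OF spP snd_meas] spP by simp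
  have "finite_measure_subalgebra P Fs"
    unfolding finite_measure_subalgebra_def finite_measure_subalgebra_axioms_def
    using sub P.finite_measure_axioms by simp
  then show sfs: "sigma_finite_subalgebra P Fs"
    by (rule finite_measure_subalgebra_is_sigma_finite)
  interpret sigma_finite_subalgebra P Fs by (rule sfs)
  have fst_in: "fst z \<in> {a..b}" if "z \<in> space P" for z
    using that sp spP by (auto simp: space_pair_measure)
  have fst_meas[measurable]: "fst \<in> borel_measurable P"
    using measurable_compose[OF measurable_fst idm, of S] by (subst measurable_cong_sets[OF sP refl]) (simp add: comp_def)
  show int_fst: "integrable P fst"
  proof (rule P.integrable_const_bound[where B=b])
    show "AE x in P. norm (fst x) \<le> b"
    proof (rule AE_I2)
      fix x assume "x \<in> space P"
      then have "fst x \<in> {a..b}" by (rule fst_in)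
      then show "norm (fst x) \<le> b" using a by auto
    qed
  qed simp
  have m_eq: "m = real_cond_exp P Fs fst"
    unfolding m_def post_mean_def P_def Fs_def ..
  have "AE z in P. m z \<ge> a" unfolding m_eq
    by (rule real_cond_exp_ge_c[OF int_fst]) (use fst_in in \<open>auto intro!: AE_I2\<close>)
  moreover have "AE z in P. m z \<le> b" unfolding m_eq
    by (rule real_cond_exp_le_c[OF int_fst]) (use fst_in in \<open>auto intro!: AE_I2\<close>)
  ultimately show "AE z in P. m z \<in> {a..b}" by auto
  show mF: "m \<in> borel_measurable Fs" unfolding m_eq by simp
  show "m \<in> borel_measurable (mu \<Otimes>\<^sub>M S)"
    using borel_measurable_cond_exp2[of P Fs fst] unfolding m_eq
    by (subst measurable_cong_sets[OF sP[symmetric] refl])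
  fix \<psi> :: "'x \<Rightarrow> real" and B assume psi: "\<psi> \<in> borel_measurable S" and bnd: "\<And>y. y \<in> space S \<Longrightarrow> \<bar>\<psi> y\<bar> \<le> B"
  have snd_F: "snd \<in> measurable Fs S"
    unfolding Fs_def by (rule measurable_vimage_algebra1) (auto simp: space_pair_measure)
  have psiF: "(\<lambda>z. \<psi> (snd z)) \<in> borel_measurable Fs"
    by (rule measurable_compose[OF snd_F psi])
  have psiP: "(\<lambda>z. \<psi> (snd z)) \<in> borel_measurable P"
    by (rule measurable_compose[OF snd_meas psi])
  have "integrable P (\<lambda>z. \<psi> (snd z) * fst z)"
  proof (rule P.integrable_const_bound[where B="B * b"])
    show "AE x in P. norm (\<psi> (snd x) * fst x) \<le> B * b"
    proof (rule AE_I2)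
      fix x assume "x \<in> space P"
      then have f: "fst x \<in> {a..b}" by (rule fst_in)
      have "snd x \<in> space S" using \<open>x \<in> space P\<close> unfolding spP space_pair_measure by (simp add: mem_Times_iff)
      then have bx: "\<bar>\<psi> (snd x)\<bar> \<le> B" by (rule bnd)
      have "\<bar>\<psi> (snd x)\<bar> * \<bar>fst x\<bar> \<le> B * b"
        using f a bx by (intro mult_mono) auto
      then show "norm (\<psi> (snd x) * fst x) \<le> B * b" by (simp add: abs_mult)
    qed
  qed (use psiP fst_meas in measurable)
  then show "(\<integral>z. \<psi> (snd z) * m z \<partial>P) = (\<integral>z. \<psi> (snd z) * fst z \<partial>P)"
    unfolding m_eq by (rule real_cond_exp_intg(2)[OF _ psiF fst_meas])
qed

lemma kernel_at:
  assumes "\<kappa> \<in> M \<rightarrow>\<^sub>M prob_algebra S" "x \<in> space M"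
  shows "sets (\<kappa> x) = sets S" "prob_space (\<kappa> x)" "space (\<kappa> x) = space S"
proof -
  have "\<kappa> x \<in> space (prob_algebra S)" using measurable_space[OF assms] .
  then show s: "sets (\<kappa> x) = sets S" and "prob_space (\<kappa> x)" by (auto simp: space_prob_algebra)
  show "space (\<kappa> x) = space S" using sets_eq_imp_space_eq[OF s] .
qed

lemma T_construction:
  fixes mu :: "real measure" and SX :: "'x measure" and SY :: "'y measure" and K K' g
  assumes mu: "prob_space mu" and K[measurable]: "K \<in> mu \<rightarrow>\<^sub>M prob_algebra SX"
    and K'[measurable]: "K' \<in> mu \<rightarrow>\<^sub>M prob_algebra SY"
    and g[measurable]: "g \<in> SY \<rightarrow>\<^sub>M prob_algebra SX" and Kg: "\<And>q. q \<in> space mu \<Longrightarrow> K q = K' q \<bind> g"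
  defines "PY \<equiv> joint mu SY K'" and "PX \<equiv> joint mu SX K"
    and "M3 \<equiv> (mu \<Otimes>\<^sub>M SY) \<Otimes>\<^sub>M SX"
    and "N \<equiv> (\<lambda>z. distr (g (snd z)) ((mu \<Otimes>\<^sub>M SY) \<Otimes>\<^sub>M SX) (\<lambda>x. (z, x)))"
  shows "prob_space (PY \<bind> N)" "sets (PY \<bind> N) = sets M3" "space (PY \<bind> N) = space M3"
    "distr (PY \<bind> N) (mu \<Otimes>\<^sub>M SY) fst = PY"
    "distr (PY \<bind> N) (mu \<Otimes>\<^sub>M SX) (\<lambda>w. (fst (fst w), snd w)) = PX"
    "\<And>a C E. a \<in> borel_measurable (mu \<Otimes>\<^sub>M SY) \<Longrightarrow> (\<And>z. z \<in> space (mu \<Otimes>\<^sub>M SY) \<Longrightarrow> 0 \<le> a z \<and> a z \<le> C)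
       \<Longrightarrow> E \<in> sets SX \<Longrightarrow>
       (\<integral>w. indicator E (snd w) * a (fst w) \<partial>(PY \<bind> N)) = (\<integral>z. a z * measure (g (snd z)) E \<partial>PY)"
proof -
  note jY = joint_props[OF mu K', folded PY_def]
  note jX = joint_props[OF mu K, folded PX_def]
  have NmS[measurable]: "N \<in> (mu \<Otimes>\<^sub>M SY) \<rightarrow>\<^sub>M prob_algebra M3"
    unfolding N_def M3_def by measurable
  have Nm: "N \<in> PY \<rightarrow>\<^sub>M prob_algebra M3"
    using NmS by (subst measurable_cong_sets[OF jY(2) refl])
  have PYin: "PY \<in> space (prob_algebra (mu \<Otimes>\<^sub>M SY))"
    using jY by (simp add: space_prob_algebra)
  show sT: "sets (PY \<bind> N) = sets M3" by (rule sets_bind'[OF PYin NmS])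
  show pT: "prob_space (PY \<bind> N)" by (rule prob_space_bind'[OF PYin NmS])
  show spT: "space (PY \<bind> N) = space M3" using sets_eq_imp_space_eq[OF sT] .
  have neY: "space PY \<noteq> {}" using prob_space.not_empty[OF jY(3)] .
  have Nsub: "N \<in> measurable PY (subprob_algebra M3)" by (rule measurable_prob_algebraD[OF Nm])
  have gz: "sets (g (snd z)) = sets SX" "prob_space (g (snd z))" if "z \<in> space (mu \<Otimes>\<^sub>M SY)" for z
    using kernel_at[OF g, of "snd z"] that by (auto simp: space_pair_measure)
  have pairz: "(\<lambda>x. (z, x)) \<in> g (snd z) \<rightarrow>\<^sub>M (mu \<Otimes>\<^sub>M SY) \<Otimes>\<^sub>M SX" if "z \<in> space (mu \<Otimes>\<^sub>M SY)" for z
    using measurable_Pair1'[OF that, of SX] by (subst measurable_cong_sets[OF gz(1)[OF that] refl])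
  have "distr (PY \<bind> N) (mu \<Otimes>\<^sub>M SY) fst = PY \<bind> (\<lambda>z. distr (N z) (mu \<Otimes>\<^sub>M SY) fst)"
    by (rule distr_bind[OF Nsub neY]) (simp add: M3_def)
  also have "\<dots> = PY \<bind> return (mu \<Otimes>\<^sub>M SY)"
  proof (rule bind_cong)
    fix z assume z: "z \<in> space PY"
    then have z': "z \<in> space (mu \<Otimes>\<^sub>M SY)" using jY(4) by simp
    have "distr (N z) (mu \<Otimes>\<^sub>M SY) fst = distr (g (snd z)) (mu \<Otimes>\<^sub>M SY) (fst \<circ> (\<lambda>x. (z, x)))"
      unfolding N_def by (rule distr_distr[OF _ pairz[OF z']]) (simp add: M3_def)
    also have "\<dots> = distr (g (snd z)) (mu \<Otimes>\<^sub>M SY) (\<lambda>x. z)" by (simp add: comp_def)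
    also have "\<dots> = return (mu \<Otimes>\<^sub>M SY) z"
      using prob_space.distr_const[OF gz(2)[OF z'] z'] .
    finally show "distr (N z) (mu \<Otimes>\<^sub>M SY) fst = return (mu \<Otimes>\<^sub>M SY) z" .
  qed simp
  also have "\<dots> = PY" by (rule bind_return''[OF jY(2)])
  finally show "distr (PY \<bind> N) (mu \<Otimes>\<^sub>M SY) fst = PY" .
  define H where "H = (\<lambda>z. distr (g (snd z)) (mu \<Otimes>\<^sub>M SX) (\<lambda>x. (fst z, x)))"
  have HmS[measurable]: "H \<in> (mu \<Otimes>\<^sub>M SY) \<rightarrow>\<^sub>M prob_algebra (mu \<Otimes>\<^sub>M SX)"
    unfolding H_def by measurable
  have "distr (PY \<bind> N) (mu \<Otimes>\<^sub>M SX) (\<lambda>w. (fst (fst w), snd w)) = PY \<bind> (\<lambda>z. distr (N z) (mu \<Otimes>\<^sub>M SX) (\<lambda>w. (fst (fst w), snd w)))"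
    by (rule distr_bind[OF Nsub neY]) (simp add: M3_def)
  also have "\<dots> = PY \<bind> H"
  proof (rule bind_cong)
    fix z assume z: "z \<in> space PY"
    then have z': "z \<in> space (mu \<Otimes>\<^sub>M SY)" using jY(4) by simp
    have "distr (N z) (mu \<Otimes>\<^sub>M SX) (\<lambda>w. (fst (fst w), snd w)) = distr (g (snd z)) (mu \<Otimes>\<^sub>M SX) ((\<lambda>w. (fst (fst w), snd w)) \<circ> (\<lambda>x. (z, x)))"
      unfolding N_def by (rule distr_distr[OF _ pairz[OF z']]) (simp add: M3_def)
    also have "\<dots> = H z" by (simp add: comp_def H_def)
    finally show "distr (N z) (mu \<Otimes>\<^sub>M SX) (\<lambda>w. (fst (fst w), snd w)) = H z" .
  qed simp
  also have "\<dots> = mu \<bind> (\<lambda>q. distr (K' q) (mu \<Otimes>\<^sub>M SY) (\<lambda>y. (q, y)) \<bind> H)"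
    unfolding PY_def joint_def
    by (rule bind_assoc[OF measurable_prob_algebraD[OF jY(1)] measurable_prob_algebraD[OF HmS]])
  also have "\<dots> = mu \<bind> (\<lambda>q. distr (K q) (mu \<Otimes>\<^sub>M SX) (\<lambda>x. (q, x)))"
  proof (rule bind_cong)
    fix q assume q: "q \<in> space mu"
    note kq = kernel_at[OF K' q]
    have pq: "(\<lambda>y. (q, y)) \<in> K' q \<rightarrow>\<^sub>M mu \<Otimes>\<^sub>M SY"
      using measurable_Pair1'[OF q, of SY] by (subst measurable_cong_sets[OF kq(1) refl])
    have neq: "space (K' q) \<noteq> {}" using prob_space.not_empty[OF kq(2)] .
    have "distr (K' q) (mu \<Otimes>\<^sub>M SY) (\<lambda>y. (q, y)) \<bind> H = K' q \<bind> (\<lambda>y. H (q, y))"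
      by (rule bind_distr[OF pq measurable_prob_algebraD[OF HmS] neq])
    also have "\<dots> = K' q \<bind> (\<lambda>y. distr (g y) (mu \<Otimes>\<^sub>M SX) (\<lambda>x. (q, x)))"
      by (simp add: H_def)
    also have "\<dots> = distr (K' q \<bind> g) (mu \<Otimes>\<^sub>M SX) (\<lambda>x. (q, x))"
    proof (rule distr_bind[symmetric])
      show "g \<in> measurable (K' q) (subprob_algebra SX)"
        using measurable_prob_algebraD[OF g] by (subst measurable_cong_sets[OF kq(1) refl])
      show "space (K' q) \<noteq> {}" by (rule neq)
      show "(\<lambda>x. (q, x)) \<in> SX \<rightarrow>\<^sub>M mu \<Otimes>\<^sub>M SX" using measurable_Pair1'[OF q, of SX] .
    qed
    also have "\<dots> = distr (K q) (mu \<Otimes>\<^sub>M SX) (\<lambda>x. (q, x))" using Kg[OF q] by simp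
    finally show "distr (K' q) (mu \<Otimes>\<^sub>M SY) (\<lambda>y. (q, y)) \<bind> H = distr (K q) (mu \<Otimes>\<^sub>M SX) (\<lambda>x. (q, x))" .
  qed simp
  also have "\<dots> = PX" unfolding PX_def joint_def ..
  finally show "distr (PY \<bind> N) (mu \<Otimes>\<^sub>M SX) (\<lambda>w. (fst (fst w), snd w)) = PX" .
  fix a :: "real \<times> 'y \<Rightarrow> real" and C :: real and E :: "'x set"
  assume am[measurable]: "a \<in> borel_measurable (mu \<Otimes>\<^sub>M SY)"
    and ab: "\<And>z. z \<in> space (mu \<Otimes>\<^sub>M SY) \<Longrightarrow> 0 \<le> a z \<and> a z \<le> C"
    and E[measurable]: "E \<in> sets SX"
  interpret T: prob_space "PY \<bind> N" by (rule pT)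
  interpret PY: prob_space PY by (rule jY(3))
  have fm: "(\<lambda>w. indicator E (snd w) * a (fst w)) \<in> borel_measurable M3"
    unfolding M3_def by measurable
  have gmeas: "(\<lambda>z. measure (g (snd z)) E) \<in> borel_measurable (mu \<Otimes>\<^sub>M SY)"
    by measurable
  have "(\<integral>\<^sup>+w. ennreal (indicator E (snd w) * a (fst w)) \<partial>(PY \<bind> N))
      = (\<integral>\<^sup>+z. \<integral>\<^sup>+w. ennreal (indicator E (snd w) * a (fst w)) \<partial>N z \<partial>PY)"
    by (rule nn_integral_bind[OF _ Nsub]) (use fm in measurable)
  also have "\<dots> = (\<integral>\<^sup>+z. ennreal (a z * measure (g (snd z)) E) \<partial>PY)"
  proof (rule nn_integral_cong)
    fix z assume z: "z \<in> space PY"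
    then have z': "z \<in> space (mu \<Otimes>\<^sub>M SY)" using jY(4) by simp
    have "(\<integral>\<^sup>+w. ennreal (indicator E (snd w) * a (fst w)) \<partial>N z)
        = (\<integral>\<^sup>+x. ennreal (indicator E (snd (z, x)) * a (fst (z, x))) \<partial>g (snd z))"
      unfolding N_def by (rule nn_integral_distr[OF pairz[OF z']]) (use fm in measurable)
    also have "\<dots> = (\<integral>\<^sup>+x. ennreal (a z) * indicator E x \<partial>g (snd z))"
      by (intro nn_integral_cong) (auto split: split_indicator)
    also have "\<dots> = ennreal (a z) * emeasure (g (snd z)) E"
      by (rule nn_integral_cmult_indicator) (simp add: gz(1)[OF z'])
    also have "\<dots> = ennreal (a z * measure (g (snd z)) E)"
      using ab[OF z'] finite_measure.emeasure_eq_measure[OF prob_space.finite_measure[OF gz(2)[OF z']]]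
      by (simp add: ennreal_mult)
    finally show "(\<integral>\<^sup>+w. ennreal (indicator E (snd w) * a (fst w)) \<partial>N z) = ennreal (a z * measure (g (snd z)) E)" .
  qed
  finally have nn: "(\<integral>\<^sup>+w. ennreal (indicator E (snd w) * a (fst w)) \<partial>(PY \<bind> N))
      = (\<integral>\<^sup>+z. ennreal (a z * measure (g (snd z)) E) \<partial>PY)" .
  have fstT: "fst w \<in> space (mu \<Otimes>\<^sub>M SY)" if "w \<in> space (PY \<bind> N)" for w
    using that spT by (auto simp: M3_def space_pair_measure)
  have fmT: "(\<lambda>w. indicator E (snd w) * a (fst w)) \<in> borel_measurable (PY \<bind> N)"
    using fm by (subst measurable_cong_sets[OF sT refl])
  have gmP: "(\<lambda>z. a z * measure (g (snd z)) E) \<in> borel_measurable PY"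
    using am gmeas by (subst measurable_cong_sets[OF jY(2) refl]) measurable
  have i1: "integrable (PY \<bind> N) (\<lambda>w. indicator E (snd w) * a (fst w))"
  proof (rule T.integrable_const_bound[where B=C])
    show "AE x in PY \<bind> N. norm (indicator E (snd x) * a (fst x)) \<le> C"
    proof (rule AE_I2)
      fix x assume "x \<in> space (PY \<bind> N)"
      from ab[OF fstT[OF this]] show "norm (indicator E (snd x) * a (fst x)) \<le> C"
        by (cases "snd x \<in> E") auto
    qed
  qed (rule fmT)
  have mle: "measure (g (snd z)) E \<le> 1" if "z \<in> space (mu \<Otimes>\<^sub>M SY)" for z
    using prob_space.prob_le_1[OF gz(2)[OF that]] .
  have n1: "AE w in PY \<bind> N. 0 \<le> indicator E (snd w) * a (fst w)"
  proof (rule AE_I2)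
    fix x assume "x \<in> space (PY \<bind> N)"
    from ab[OF fstT[OF this]] show "0 \<le> indicator E (snd x) * a (fst x)" by simp
  qed
  have n2: "AE z in PY. 0 \<le> a z * measure (g (snd z)) E"
  proof (rule AE_I2)
    fix z assume "z \<in> space PY"
    then have z': "z \<in> space (mu \<Otimes>\<^sub>M SY)" using jY(4) by simp
    from ab[OF z'] show "0 \<le> a z * measure (g (snd z)) E" by simp
  qed
  have i2: "integrable PY (\<lambda>z. a z * measure (g (snd z)) E)"
  proof (rule PY.integrable_const_bound[where B=C])
    show "AE x in PY. norm (a x * measure (g (snd x)) E) \<le> C"
    proof (rule AE_I2)
      fix z assume "z \<in> space PY"
      then have z': "z \<in> space (mu \<Otimes>\<^sub>M SY)" using jY(4) by simp
      have "a z * measure (g (snd z)) E \<le> C * 1"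
        using ab[OF z'] mle[OF z'] by (intro mult_mono) auto
      then show "norm (a z * measure (g (snd z)) E) \<le> C" using ab[OF z'] by simp
    qed
  qed (rule gmP)
  have "ennreal (\<integral>w. indicator E (snd w) * a (fst w) \<partial>(PY \<bind> N)) = ennreal (\<integral>z. a z * measure (g (snd z)) E \<partial>PY)"
    using nn nn_integral_eq_integral[OF i1 n1] nn_integral_eq_integral[OF i2 n2] by simp
  moreover have "0 \<le> (\<integral>w. indicator E (snd w) * a (fst w) \<partial>(PY \<bind> N))"
    by (rule integral_nonneg_AE[OF n1])
  moreover have "0 \<le> (\<integral>z. a z * measure (g (snd z)) E \<partial>PY)"
    by (rule integral_nonneg_AE[OF n2])
  ultimately show "(\<integral>w. indicator E (snd w) * a (fst w) \<partial>(PY \<bind> N)) = (\<integral>z. a z * measure (g (snd z)) E \<partial>PY)"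
    by simp
qed

lemma core:
  fixes mu :: "real measure" and SX :: "'x measure" and SY :: "'y measure" and K K' g
    and W :: "real \<Rightarrow> real" and a b D :: real
  assumes mu: "prob_space mu" and K[measurable]: "K \<in> mu \<rightarrow>\<^sub>M prob_algebra SX"
    and K'[measurable]: "K' \<in> mu \<rightarrow>\<^sub>M prob_algebra SY"
    and g[measurable]: "g \<in> SY \<rightarrow>\<^sub>M prob_algebra SX" and Kg: "\<And>q. q \<in> space mu \<Longrightarrow> K q = K' q \<bind> g"
    and sp: "space mu \<subseteq> {a..b}" and a: "0 < a" and ab: "a \<le> b" and idm: "(\<lambda>q. q) \<in> borel_measurable mu"
    and Wc: "convex_on UNIV W" and Wm[measurable]: "W \<in> borel_measurable borel"
    and Wb: "\<And>x. x \<in> {a..b} \<Longrightarrow> \<bar>W x\<bar> \<le> D"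
  shows "(\<integral>z. W (post_mean mu SX K z) \<partial>joint mu SX K) \<le> (\<integral>z. W (post_mean mu SY K' z) \<partial>joint mu SY K')"
proof -
  define PY where "PY = joint mu SY K'"
  define PX where "PX = joint mu SX K"
  define FY where "FY = vimage_algebra (space (mu \<Otimes>\<^sub>M SY)) snd SY"
  define FX where "FX = vimage_algebra (space (mu \<Otimes>\<^sub>M SX)) snd SX"
  define mY where "mY = post_mean mu SY K'"
  define mX where "mX = post_mean mu SX K"
  define M3 where "M3 = (mu \<Otimes>\<^sub>M SY) \<Otimes>\<^sub>M SX"
  define N where "N = (\<lambda>z. distr (g (snd z)) ((mu \<Otimes>\<^sub>M SY) \<Otimes>\<^sub>M SX) (\<lambda>x. (z, x)))"
  define T where "T = PY \<bind> N"
  note pY = pm_props[OF mu K' sp a idm, folded PY_def FY_def mY_def]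
  note pX = pm_props[OF mu K sp a idm, folded PX_def FX_def mX_def]
  note TT = T_construction[OF mu K K' g Kg, folded PY_def PX_def N_def M3_def, folded T_def]
  note jY = joint_props[OF mu K', folded PY_def]
  note jX = joint_props[OF mu K, folded PX_def]
  interpret T: prob_space T by (rule TT(1))
  interpret PY: prob_space PY by (rule jY(3))
  interpret PX: prob_space PX by (rule jX(3))
  define cl where "cl = (\<lambda>v::real. max a (min b v))"
  have cl_in: "cl v \<in> {a..b}" for v using ab by (auto simp: cl_def)
  have cl_m[measurable]: "cl \<in> borel_measurable borel" unfolding cl_def by measurable
  have cl_id: "v \<in> {a..b} \<Longrightarrow> cl v = v" for v by (auto simp: cl_def)
  define hY where "hY = (\<lambda>z. cl (mY z))"
  define hX where "hX = (\<lambda>z. cl (mX z))"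
  have mYF: "mY \<in> borel_measurable FY" by (rule pY(3))
  have mXF: "mX \<in> borel_measurable FX" by (rule pX(3))
  have mYm: "mY \<in> borel_measurable (mu \<Otimes>\<^sub>M SY)" by (rule pY(4))
  have mXm: "mX \<in> borel_measurable (mu \<Otimes>\<^sub>M SX)" by (rule pX(4))
  have hYF: "hY \<in> borel_measurable FY" unfolding hY_def by (rule measurable_compose[OF mYF cl_m])
  have hXF: "hX \<in> borel_measurable FX" unfolding hX_def by (rule measurable_compose[OF mXF cl_m])
  have hYm: "hY \<in> borel_measurable (mu \<Otimes>\<^sub>M SY)" unfolding hY_def by (rule measurable_compose[OF mYm cl_m])
  have hXm: "hX \<in> borel_measurable (mu \<Otimes>\<^sub>M SX)" unfolding hX_def by (rule measurable_compose[OF mXm cl_m])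
  have hYP: "hY \<in> borel_measurable PY" using hYm by (subst measurable_cong_sets[OF jY(2) refl])
  have hXP: "hX \<in> borel_measurable PX" using hXm by (subst measurable_cong_sets[OF jX(2) refl])
  have mYP: "mY \<in> borel_measurable PY" using mYm by (subst measurable_cong_sets[OF jY(2) refl])
  have mXP: "mX \<in> borel_measurable PX" using mXm by (subst measurable_cong_sets[OF jX(2) refl])
  have hY_ae: "AE z in PY. hY z = mY z" using pY(2) by eventually_elim (simp add: hY_def cl_id)
  have hX_ae: "AE z in PX. hX z = mX z" using pX(2) by eventually_elim (simp add: hX_def cl_id)
  have hY_in: "hY z \<in> {a..b}" for z unfolding hY_def by (rule cl_in)
  have hX_in: "hX z \<in> {a..b}" for z unfolding hX_def by (rule cl_in)
  have hY_abs: "\<bar>hY z\<bar> \<le> b" for z using hY_in[of z] a by auto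
  have hX_abs: "\<bar>hX z\<bar> \<le> b" for z using hX_in[of z] a by auto
  have sndY: "snd \<in> measurable PY SY"
    using measurable_snd by (subst measurable_cong_sets[OF jY(2) refl])
  have sndX: "snd \<in> measurable PX SX"
    using measurable_snd by (subst measurable_cong_sets[OF jX(2) refl])
  have hYprop: "(\<integral>z. \<psi> (snd z) * hY z \<partial>PY) = (\<integral>z. \<psi> (snd z) * fst z \<partial>PY)"
    if psi: "\<psi> \<in> borel_measurable SY" and bnd: "\<And>y. y \<in> space SY \<Longrightarrow> \<bar>\<psi> y\<bar> \<le> Bd" for \<psi> Bd
  proof -
    have pm: "(\<lambda>z. \<psi> (snd z)) \<in> borel_measurable PY" by (rule measurable_compose[OF sndY psi])
    have "(\<integral>z. \<psi> (snd z) * hY z \<partial>PY) = (\<integral>z. \<psi> (snd z) * mY z \<partial>PY)"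
      by (rule integral_cong_AE) (use pm hYP mYP hY_ae in \<open>auto intro: borel_measurable_times\<close>)
    also have "\<dots> = (\<integral>z. \<psi> (snd z) * fst z \<partial>PY)" by (rule pY(6)[OF psi bnd])
    finally show ?thesis .
  qed
  have hXprop: "(\<integral>z. \<psi> (snd z) * hX z \<partial>PX) = (\<integral>z. \<psi> (snd z) * fst z \<partial>PX)"
    if psi: "\<psi> \<in> borel_measurable SX" and bnd: "\<And>y. y \<in> space SX \<Longrightarrow> \<bar>\<psi> y\<bar> \<le> Bd" for \<psi> Bd
  proof -
    have pm: "(\<lambda>z. \<psi> (snd z)) \<in> borel_measurable PX" by (rule measurable_compose[OF sndX psi])
    have "(\<integral>z. \<psi> (snd z) * hX z \<partial>PX) = (\<integral>z. \<psi> (snd z) * mX z \<partial>PX)"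
      by (rule integral_cong_AE) (use pm hXP mXP hX_ae in \<open>auto intro: borel_measurable_times\<close>)
    also have "\<dots> = (\<integral>z. \<psi> (snd z) * fst z \<partial>PX)" by (rule pX(6)[OF psi bnd])
    finally show ?thesis .
  qed
  define Gx where "Gx = vimage_algebra (space M3) snd SX"
  have sT: "sets T = sets M3" by (rule TT(2))
  have spT: "space T = space M3" by (rule TT(3))
  have sndT: "snd \<in> measurable T SX"
    unfolding M3_def using measurable_snd by (subst measurable_cong_sets[OF sT[unfolded M3_def] refl])
  have sub: "subalgebra T Gx"
    unfolding subalgebra_def Gx_def
    using sets_image_in_sets[OF spT sndT] spT by simp
  have "finite_measure_subalgebra T Gx"
    unfolding finite_measure_subalgebra_def finite_measure_subalgebra_axioms_def
    using sub T.finite_measure_axioms by simp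
  then interpret sigma_finite_subalgebra T Gx
    by (rule finite_measure_subalgebra_is_sigma_finite)
  define \<phi> where "\<phi> = (\<lambda>w::(real \<times> 'y) \<times> 'x. (fst (fst w), snd w))"
  have phiM3: "\<phi> \<in> measurable M3 (mu \<Otimes>\<^sub>M SX)" unfolding \<phi>_def M3_def by measurable
  have phiT: "\<phi> \<in> measurable T (mu \<Otimes>\<^sub>M SX)" using phiM3 by (subst measurable_cong_sets[OF sT refl])
  have fstM3: "fst \<in> measurable M3 (mu \<Otimes>\<^sub>M SY)" unfolding M3_def by measurable
  have fstT: "fst \<in> measurable T (mu \<Otimes>\<^sub>M SY)" using fstM3 by (subst measurable_cong_sets[OF sT refl])
  define A where "A = (\<lambda>w::(real \<times> 'y) \<times> 'x. hY (fst w))"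
  define B where "B = (\<lambda>w. hX (\<phi> w))"
  have AT: "A \<in> borel_measurable T" unfolding A_def by (rule measurable_compose[OF fstT hYm])
  have BT: "B \<in> borel_measurable T" unfolding B_def by (rule measurable_compose[OF phiT hXm])
  have sndG: "snd \<in> measurable Gx SX"
    unfolding Gx_def by (rule measurable_vimage_algebra1) (auto simp: M3_def space_pair_measure)
  have phiG: "\<phi> \<in> measurable Gx FX"
    unfolding FX_def
  proof (rule measurable_vimage_algebra2)
    show "\<phi> \<in> space Gx \<rightarrow> space (mu \<Otimes>\<^sub>M SX)"
      unfolding Gx_def M3_def \<phi>_def by (auto simp: space_pair_measure)
    show "(\<lambda>x. snd (\<phi> x)) \<in> Gx \<rightarrow>\<^sub>M SX" unfolding \<phi>_def using sndG by simp
  qed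
  have BG: "B \<in> borel_measurable Gx" unfolding B_def by (rule measurable_compose[OF phiG hXF])
  have intA: "integrable T A"
  proof (rule T.integrable_const_bound[where B=b])
    show "AE x in T. norm (A x) \<le> b" by (intro AE_I2) (simp add: A_def hY_abs)
  qed (rule AT)
  have intB: "integrable T B"
  proof (rule T.integrable_const_bound[where B=b])
    show "AE x in T. norm (B x) \<le> b" by (intro AE_I2) (simp add: B_def hX_abs)
  qed (rule BT)
  have fst_mu: "(fst :: real \<times> 'y \<Rightarrow> real) \<in> borel_measurable (mu \<Otimes>\<^sub>M SY)"
    using measurable_compose[OF measurable_fst idm, of SY] by (simp add: comp_def)
  have fst_bnd: "0 \<le> fst z \<and> fst z \<le> b" if "z \<in> space (mu \<Otimes>\<^sub>M SY)" for z :: "real \<times> 'y"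
    using that sp a by (auto simp: space_pair_measure)
  have TT5: "distr T (mu \<Otimes>\<^sub>M SX) \<phi> = PX" using TT(5) unfolding \<phi>_def by simp
  have TT4: "distr T (mu \<Otimes>\<^sub>M SY) fst = PY" using TT(4) by simp
  have distrX: "(\<integral>v. f v \<partial>PX) = (\<integral>w. f (\<phi> w) \<partial>T)" if "f \<in> borel_measurable (mu \<Otimes>\<^sub>M SX)" for f :: "_ \<Rightarrow> real"
    by (subst TT5[symmetric]) (rule integral_distr[OF phiT that])
  have distrY: "(\<integral>v. f v \<partial>PY) = (\<integral>w. f (fst w) \<partial>T)" if "f \<in> borel_measurable (mu \<Otimes>\<^sub>M SY)" for f :: "_ \<Rightarrow> real"
    by (subst TT4[symmetric]) (rule integral_distr[OF fstT that])
  have TT6: "(\<integral>w. indicator E (snd w) * a' (fst w) \<partial>T) = (\<integral>z. a' z * measure (g (snd z)) E \<partial>PY)"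
    if "a' \<in> borel_measurable (mu \<Otimes>\<^sub>M SY)" "\<And>z. z \<in> space (mu \<Otimes>\<^sub>M SY) \<Longrightarrow> 0 \<le> a' z \<and> a' z \<le> C"
      "E \<in> sets SX" for a' C E
    using TT(6) that by blast
  have hY_bnd: "0 \<le> hY z \<and> hY z \<le> b" for z using hY_in[of z] a by auto
  have CE: "AE w in T. real_cond_exp T Gx A w = B w"
  proof (rule real_cond_exp_charact)
    fix S assume S: "S \<in> sets Gx"
    have sf: "snd \<in> space M3 \<rightarrow> space SX" by (auto simp: M3_def space_pair_measure)
    have "S \<in> {snd -` A \<inter> space M3 | A. A \<in> sets SX}"
      using S unfolding Gx_def sets_vimage_algebra2[OF sf] .
    then obtain E where E: "E \<in> sets SX" and SE: "S = snd -` E \<inter> space M3"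
      by blast
    have ind: "(\<integral>w\<in>S. f w \<partial>T) = (\<integral>w. indicator E (snd w) * f w \<partial>T)" for f :: "_ \<Rightarrow> real"
      unfolding set_lebesgue_integral_def
      by (rule Bochner_Integration.integral_cong) (auto simp: SE spT indicator_def)
    have gle: "\<bar>measure (g y) E\<bar> \<le> 1" if "y \<in> space SY" for y
      using prob_space.prob_le_1[OF kernel_at(2)[OF g that]] by simp
    have gm: "(\<lambda>y. measure (g y) E) \<in> borel_measurable SY"
      using E by measurable
    have im: "indicator E \<in> borel_measurable SX" using E by simp
    have ile: "\<bar>indicator E y :: real\<bar> \<le> 1" for y by (simp add: indicator_def)
    have "(\<integral>w\<in>S. A w \<partial>T) = (\<integral>w. indicator E (snd w) * hY (fst w) \<partial>T)"
      unfolding ind A_def ..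
    also have "\<dots> = (\<integral>z. hY z * measure (g (snd z)) E \<partial>PY)"
      by (rule TT6[OF hYm hY_bnd E])
    also have "\<dots> = (\<integral>z. measure (g (snd z)) E * hY z \<partial>PY)" by (simp add: mult.commute)
    also have "\<dots> = (\<integral>z. measure (g (snd z)) E * fst z \<partial>PY)"
      by (rule hYprop[OF gm gle])
    also have "\<dots> = (\<integral>z. fst z * measure (g (snd z)) E \<partial>PY)" by (simp add: mult.commute)
    also have "\<dots> = (\<integral>w. indicator E (snd w) * fst (fst w) \<partial>T)"
      by (rule TT6[OF fst_mu fst_bnd E, symmetric])
    also have "\<dots> = (\<integral>w. indicator E (snd (\<phi> w)) * fst (\<phi> w) \<partial>T)" by (simp add: \<phi>_def)
    also have "\<dots> = (\<integral>v. indicator E (snd v) * fst v \<partial>PX)"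
      by (rule distrX[symmetric]) (use E idm in measurable)
    also have "\<dots> = (\<integral>v. indicator E (snd v) * hX v \<partial>PX)"
      by (rule hXprop[OF im ile, symmetric])
    also have "\<dots> = (\<integral>w. indicator E (snd (\<phi> w)) * hX (\<phi> w) \<partial>T)"
      by (rule distrX) (use E hXm in measurable)
    also have "\<dots> = (\<integral>w\<in>S. B w \<partial>T)"
      unfolding ind B_def by (simp add: \<phi>_def)
    finally show "(\<integral>w\<in>S. A w \<partial>T) = (\<integral>w\<in>S. B w \<partial>T)" .
  qed (rule intA, rule intB, rule BG)
  have WA_m: "(\<lambda>w. W (A w)) \<in> borel_measurable T" using AT Wm by (rule measurable_compose)
  have WB_m: "(\<lambda>w. W (B w)) \<in> borel_measurable T" using BT Wm by (rule measurable_compose)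
  have intWA: "integrable T (\<lambda>w. W (A w))"
  proof (rule T.integrable_const_bound[where B=D])
    show "AE x in T. norm (W (A x)) \<le> D" by (intro AE_I2) (simp add: A_def Wb[OF hY_in])
  qed (rule WA_m)
  have intWB: "integrable T (\<lambda>w. W (B w))"
  proof (rule T.integrable_const_bound[where B=D])
    show "AE x in T. norm (W (B x)) \<le> D" by (intro AE_I2) (simp add: B_def Wb[OF hX_in])
  qed (rule WB_m)
  have J: "AE w in T. W (real_cond_exp T Gx A w) \<le> real_cond_exp T Gx (\<lambda>w. W (A w)) w"
    by (rule real_cond_exp_jensens_inequality(2)[where I=UNIV and X=A and q=W, OF intA _ _ intWA Wc Wm]) auto
  have AE2: "AE w in T. W (B w) \<le> real_cond_exp T Gx (\<lambda>w. W (A w)) w"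
    using J CE by eventually_elim simp
  have "(\<integral>w. W (B w) \<partial>T) \<le> (\<integral>w. real_cond_exp T Gx (\<lambda>w. W (A w)) w \<partial>T)"
    by (rule integral_mono_AE[OF intWB real_cond_exp_int(1)[OF intWA] AE2])
  also have "\<dots> = (\<integral>w. W (A w) \<partial>T)" by (rule real_cond_exp_int(2)[OF intWA])
  finally have main: "(\<integral>w. W (B w) \<partial>T) \<le> (\<integral>w. W (A w) \<partial>T)" .
  have WhX: "(\<lambda>z. W (hX z)) \<in> borel_measurable (mu \<Otimes>\<^sub>M SX)" using hXm Wm by (rule measurable_compose)
  have WhY: "(\<lambda>z. W (hY z)) \<in> borel_measurable (mu \<Otimes>\<^sub>M SY)" using hYm Wm by (rule measurable_compose)
  have "(\<integral>z. W (mX z) \<partial>PX) = (\<integral>z. W (hX z) \<partial>PX)"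
    by (rule integral_cong_AE) (use mXP hXP Wm hX_ae in \<open>auto intro: measurable_compose\<close>)
  also have "\<dots> = (\<integral>w. W (B w) \<partial>T)" unfolding B_def by (rule distrX[OF WhX])
  also have "\<dots> \<le> (\<integral>w. W (A w) \<partial>T)" by (rule main)
  also have "\<dots> = (\<integral>z. W (hY z) \<partial>PY)" unfolding A_def by (rule distrY[OF WhY, symmetric])
  also have "\<dots> = (\<integral>z. W (mY z) \<partial>PY)"
    by (rule integral_cong_AE) (use mYP hYP Wm hY_ae in \<open>auto intro: measurable_compose\<close>)
  finally show ?thesis unfolding PX_def PY_def mX_def mY_def .
qed

theorem proposition1:
  fixes ql qh c :: real and F f :: "real \<Rightarrow> real" and mu :: "real measure"
    and SX :: "'x measure" and K :: "real \<Rightarrow> 'x measure"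
    and SY :: "'y measure" and K' :: "real \<Rightarrow> 'y measure"
  assumes q_pos: "0 < ql" and q_lt: "ql < qh"
    and c_pos: "0 < c" and c_lt: "c < ql"
    \<comment> \<open>F is the cdf of a distribution on [0,1] with support [0,1] and density f\<close>
    and f_int: "f integrable_on {0..1}" and f_tot: "integral {0..1} f = 1"
    and F_below: "\<And>x. x < 0 \<Longrightarrow> F x = 0"
    and F_dens: "\<And>x. x \<in> {0..1} \<Longrightarrow> F x = integral {0..x} f"
    and F_above: "\<And>x. 1 < x \<Longrightarrow> F x = 1"
    and f_pos: "\<And>v. v \<in> {0<..<1} \<Longrightarrow> f v > 0"
    and f_C2: "\<exists>f1 f2. (\<forall>v\<in>{0<..<1}. (f has_real_derivative f1 v) (at v)
                                 \<and> (f1 has_real_derivative f2 v) (at v))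
                      \<and> continuous_on {0<..<1} f2"
    \<comment> \<open>regularity: psi' > 0 whenever psi > 0\<close>
    and regular: "\<And>v. v \<in> {0<..<1} \<Longrightarrow> virt_val F f v > 0 \<Longrightarrow> deriv (virt_val F f) v > 0"
    \<comment> \<open>p(q) is the unique maximiser (as asserted in the setting)\<close>
    and p_unique: "\<And>q. q \<in> {ql..qh} \<Longrightarrow> \<exists>!p. \<forall>p'. profit F c q p' \<le> profit F c q p"
    \<comment> \<open>prior on Q with support Q\<close>
    and mu_prob: "prob_space mu"
    and mu_sets: "sets mu = sets (restrict_space borel {ql..qh})"
    and mu_supp: "\<And>U. open U \<Longrightarrow> U \<inter> {ql..qh} \<noteq> {} \<Longrightarrow> emeasure mu (U \<inter> {ql..qh}) > 0"
    \<comment> \<open>the two information structures of Seller\<close>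
    and pi_is: "info_structure mu SX K"
    and K'_is: "info_structure mu SY K'"
    and more_inf: "blackwell_more_informative {ql..qh} SY K' SX K"
  shows "seller_payoff F c mu SX K \<le> seller_payoff F c mu SY K'"
proof -
  have spmu: "space mu = {ql..qh}"
    using sets_eq_imp_space_eq[OF mu_sets] by (simp add: space_restrict_space)
  have idm: "(\<lambda>q. q) \<in> borel_measurable mu"
    by (subst measurable_cong_sets[OF mu_sets refl]) (rule measurable_restrict_space1, simp)
  have K: "K \<in> mu \<rightarrow>\<^sub>M prob_algebra SX" using pi_is unfolding info_structure_def .
  have K': "K' \<in> mu \<rightarrow>\<^sub>M prob_algebra SY" using K'_is unfolding info_structure_def .
  obtain g where g: "g \<in> SY \<rightarrow>\<^sub>M prob_algebra SX" and Kg0: "\<forall>q\<in>{ql..qh}. K q = K' q \<bind> g"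
    using more_inf unfolding blackwell_more_informative_def by blast
  have Kg: "\<And>q. q \<in> space mu \<Longrightarrow> K q = K' q \<bind> g" using Kg0 spmu by blast
  have sp: "space mu \<subseteq> {ql..qh}" using spmu by simp
  have Fcont: "continuous_on {0..1} F"
    using indefinite_integral_continuous_1[OF f_int] by (rule continuous_on_eq) (simp add: F_dens)
  have F0: "F 0 = 0" using F_dens[of 0] by simp
  have F1: "F 1 = 1" using F_dens[of 1] f_tot by simp
  define W where "W = Wf F c"
  have Wc: "convex_on UNIV W" unfolding W_def by (rule Wf_convex[OF Fcont])
  have Wcont: "continuous_on UNIV W" unfolding W_def by (rule Wf_cont[OF Fcont])
  have Wm: "W \<in> borel_measurable borel" by (rule borel_measurable_continuous_onI[OF Wcont])
  have "compact (W ` {ql..qh})"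
    by (rule compact_continuous_image[OF continuous_on_subset[OF Wcont]]) auto
  then have "bounded (W ` {ql..qh})" by (rule compact_imp_bounded)
  then obtain D where D: "\<forall>x\<in>W ` {ql..qh}. norm x \<le> D"
    unfolding bounded_iff by blast
  have Wb: "\<bar>W x\<bar> \<le> D" if "x \<in> {ql..qh}" for x
    using D that by simp
  define V where "V = (\<lambda>q. profit F c q (opt_price F c q))"
  have VW: "V q = W q" if q: "q \<in> {ql..qh}" for q
  proof -
    have "\<forall>p'. profit F c q p' \<le> profit F c q (opt_price F c q)"
      unfolding opt_price_def by (rule theI'[OF p_unique[OF q]])
    moreover have "0 < q" using q q_pos by auto
    ultimately show ?thesis unfolding V_def W_def
      using Wf_eq[OF Fcont F0 F1 F_below F_above _ c_pos] by blast
  qed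
  have pay: "seller_payoff F c mu S Kk = (\<integral>z. V (post_mean mu S Kk z) \<partial>joint mu S Kk)"
    if Vm: "V \<in> borel_measurable borel" and Kk: "Kk \<in> mu \<rightarrow>\<^sub>M prob_algebra S" for S :: "'z measure" and Kk
  proof -
    have pmm: "post_mean mu S Kk \<in> borel_measurable (joint mu S Kk)"
      unfolding post_mean_def by (rule borel_measurable_cond_exp2)
    have "seller_payoff F c mu S Kk = (\<integral>q. V q \<partial>post_mean_dist mu S Kk)"
      unfolding seller_payoff_def V_def ..
    also have "\<dots> = (\<integral>z. V (post_mean mu S Kk z) \<partial>joint mu S Kk)"
      unfolding post_mean_dist_def by (rule integral_distr[OF pmm Vm])
    finally show ?thesis .
  qed
  have VtoW: "(\<integral>z. V (post_mean mu S Kk z) \<partial>joint mu S Kk) = (\<integral>z. W (post_mean mu S Kk z) \<partial>joint mu S Kk)"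
    if Vm: "V \<in> borel_measurable borel" and Kk: "Kk \<in> mu \<rightarrow>\<^sub>M prob_algebra S" for S :: "'z measure" and Kk
  proof -
    have pmm: "post_mean mu S Kk \<in> borel_measurable (joint mu S Kk)"
      unfolding post_mean_def by (rule borel_measurable_cond_exp2)
    have ae: "AE z in joint mu S Kk. post_mean mu S Kk z \<in> {ql..qh}"
      by (rule pm_props(2)[OF mu_prob Kk sp q_pos idm])
    show ?thesis
    proof (rule integral_cong_AE)
      show "(\<lambda>z. V (post_mean mu S Kk z)) \<in> borel_measurable (joint mu S Kk)"
        using pmm Vm by (rule measurable_compose)
      show "(\<lambda>z. W (post_mean mu S Kk z)) \<in> borel_measurable (joint mu S Kk)"
        using pmm Wm by (rule measurable_compose)
      show "AE z in joint mu S Kk. V (post_mean mu S Kk z) = W (post_mean mu S Kk z)"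
        using ae by eventually_elim (rule VW)
    qed
  qed
  show ?thesis
  proof (cases "V \<in> borel_measurable borel")
    case True
    have "seller_payoff F c mu SX K = (\<integral>z. W (post_mean mu SX K z) \<partial>joint mu SX K)"
      using pay[OF True K] VtoW[OF True K] by simp
    also have "\<dots> \<le> (\<integral>z. W (post_mean mu SY K' z) \<partial>joint mu SY K')"
      by (rule core[OF mu_prob K K' g Kg sp q_pos less_imp_le[OF q_lt] idm Wc Wm Wb])
    also have "\<dots> = seller_payoff F c mu SY K'"
      using pay[OF True K'] VtoW[OF True K'] by simp
    finally show ?thesis .
  next
    case False
    have z: "seller_payoff F c mu S Kk = 0" for S :: "'z measure" and Kk
    proof -
      have "\<not> integrable (post_mean_dist mu S Kk) V"
      proof
        assume "integrable (post_mean_dist mu S Kk) V"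
        then have "V \<in> borel_measurable (post_mean_dist mu S Kk)" by (rule borel_measurable_integrable)
        then have "V \<in> borel_measurable borel"
          by (subst measurable_cong_sets[OF sets_distr[symmetric] refl]) (simp add: post_mean_dist_def)
        with False show False by simp
      qed
      then show ?thesis unfolding seller_payoff_def V_def[symmetric]
        by (rule not_integrable_integral_eq)
    qed
    show ?thesis using z[of SX K] z[of SY K'] by simp
  qed
qed

end
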